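(* Let $\{\mathcal Z_n\}$ be a Galton–Watson process with countably many types and irreducible mean progeny matrix $M$ satisfying the dichotomy property. Suppose there exist a probability vector $\boldsymbol\alpha_1$ with all entries strictly positive and $\lambda_1<1$ such that $\boldsymbol\alpha_1M\le\lambda_1\boldsymbol\alpha_1$, and a probability vector $\boldsymbol\alpha_2$ and $\lambda_2>1$ such that $\boldsymbol\alpha_2M\ge\lambda_2\boldsymbol\alpha_2$. Then $\boldsymbol q=\boldsymbol 1$; if $\varphi_0$ has distribution $\boldsymbol\alpha_1$ then $\mathbb E[|\mathcal Z_n|]\le\lambda_1^n$ for all $n$, so $\mathbb E[|\mathcal Z_n|]\to0$; and if $\varphi_0$ has distribution $\boldsymbol\alpha_2$ then $\mathbb E[|\mathcal Z_n|]\to\infty$ while the population still becomes extinct with probability 1.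
   Context: A (multitype) Galton–Watson process with type set $\mathcal S=\{1,2,3,\dots\}$ is $\{\mathcal Z_n=(Z_{n1},Z_{n2},\dots)\}_{n\in\mathbb N}$, $Z_{n\ell}$ the number of type-$\ell$ individuals in generation $n$, started from one individual of (possibly random) type $\varphi_0$; $|\mathcal Z_n|=\sum_\ell Z_{n\ell}$. The mean progeny matrix is $M_{ij}=\partial P_i/\partial s_j|_{\boldsymbol s=\boldsymbol 1}$ (assumed finite). Global extinction: $q_i=\mathbb P[\lim_n|\mathcal Z_n|=0\mid\varphi_0=i]$. The dichotomy property holds if for every initial type $i$, with probability 1 either $|\mathcal Z_n|=0$ eventually or $|\mathcal Z_n|\to\infty$. Vector inequalities are componentwise. *)

theory Defs
  imports "HOL-Probability.Probability"
begin

text \<open>Types are indexed by nat (the type set S = {1,2,3,...} relabelled as {0,1,2,...}).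
  A population state is a vector z :: nat => nat, z j = number of type-j individuals.
  The offspring law of a type-i individual is p i, a pmf on offspring vectors.\<close>

type_synonym popstate = "nat \<Rightarrow> nat"

definition unitvec :: "nat \<Rightarrow> popstate" where
  "unitvec i = (\<lambda>j. if j = i then 1 else 0)"

definition popsize :: "popstate \<Rightarrow> nat" where
  "popsize z = (\<Sum>j\<in>{j. z j \<noteq> 0}. z j)"

fun offspring_conv :: "(nat \<Rightarrow> popstate pmf) \<Rightarrow> nat list \<Rightarrow> popstate pmf" where
  "offspring_conv p [] = return_pmf (\<lambda>_. 0)"
| "offspring_conv p (t # ts) =
     map_pmf (\<lambda>(a, b). (\<lambda>j. a j + b j)) (pair_pmf (p t) (offspring_conv p ts))"

definition individuals :: "popstate \<Rightarrow> nat list" where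
  "individuals z = concat (map (\<lambda>j. replicate (z j) j) (sorted_list_of_set {j. z j \<noteq> 0}))"

definition gw_kernel :: "(nat \<Rightarrow> popstate pmf) \<Rightarrow> popstate \<Rightarrow> popstate pmf" where
  "gw_kernel p z = offspring_conv p (individuals z)"

text \<open>(Omega, Z) is a multitype Galton--Watson process with offspring laws p started from
  one individual whose type phi_0 has distribution mu: Z n are random population vectors
  forming a Markov chain with initial law of unitvec phi_0 and kernel gw_kernel p,
  characterised by its finite-dimensional distributions.\<close>
definition gw_process ::
  "(nat \<Rightarrow> popstate pmf) \<Rightarrow> nat pmf \<Rightarrow> 'w measure \<Rightarrow> (nat \<Rightarrow> 'w \<Rightarrow> popstate) \<Rightarrow> bool" where
  "gw_process p \<mu> \<Omega> Z \<longleftrightarrow>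
     prob_space \<Omega> \<and>
     (\<forall>n. Z n \<in> measurable \<Omega> (count_space UNIV)) \<and>
     (\<forall>xs. xs \<noteq> [] \<longrightarrow>
        measure \<Omega> {\<omega> \<in> space \<Omega>. \<forall>k < length xs. Z k \<omega> = xs ! k}
        = pmf (map_pmf unitvec \<mu>) (hd xs) *
          (\<Prod>k < length xs - 1. pmf (gw_kernel p (xs ! k)) (xs ! Suc k)))"

definition mean_matrix :: "(nat \<Rightarrow> popstate pmf) \<Rightarrow> nat \<Rightarrow> nat \<Rightarrow> ennreal" where
  "mean_matrix p i j = (\<integral>\<^sup>+ r. of_nat (r j) \<partial>measure_pmf (p i))"

fun mean_matrix_pow :: "(nat \<Rightarrow> popstate pmf) \<Rightarrow> nat \<Rightarrow> nat \<Rightarrow> nat \<Rightarrow> ennreal" where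
  "mean_matrix_pow p 0 i j = (if i = j then 1 else 0)"
| "mean_matrix_pow p (Suc n) i j = (\<Sum>k. mean_matrix_pow p n i k * mean_matrix p k j)"

definition irreducible_mean :: "(nat \<Rightarrow> popstate pmf) \<Rightarrow> bool" where
  "irreducible_mean p \<longleftrightarrow> (\<forall>i j. \<exists>n. mean_matrix_pow p n i j > 0)"

definition extinction_event :: "'w measure \<Rightarrow> (nat \<Rightarrow> 'w \<Rightarrow> popstate) \<Rightarrow> 'w set" where
  "extinction_event \<Omega> Z = {\<omega> \<in> space \<Omega>. \<exists>n. popsize (Z n \<omega>) = 0}"

definition dichotomy :: "(nat \<Rightarrow> popstate pmf) \<Rightarrow> 'w itself \<Rightarrow> bool" where
  "dichotomy p _ \<longleftrightarrow> (\<forall>i (\<Omega> :: 'w measure) Z. gw_process p (return_pmf i) \<Omega> Z \<longrightarrow>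
     (AE \<omega> in \<Omega>. (\<exists>n. popsize (Z n \<omega>) = 0) \<or>
                  filterlim (\<lambda>n. popsize (Z n \<omega>)) at_top sequentially))"

definition expected_size :: "'w measure \<Rightarrow> (nat \<Rightarrow> 'w \<Rightarrow> popstate) \<Rightarrow> nat \<Rightarrow> ennreal" where
  "expected_size \<Omega> Z n = (\<integral>\<^sup>+ \<omega>. of_nat (popsize (Z n \<omega>)) \<partial>\<Omega>)"

end

theory Submission
  imports Defs
begin

fun gwdist :: "(nat \<Rightarrow> popstate pmf) \<Rightarrow> nat pmf \<Rightarrow> nat \<Rightarrow> popstate pmf" where
  "gwdist p \<mu> 0 = map_pmf unitvec \<mu>"
| "gwdist p \<mu> (Suc n) = bind_pmf (gwdist p \<mu> n) (gw_kernel p)"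

lemma offspring_conv_fin:
  assumes "\<And>i r. r \<in> set_pmf (p i) \<Longrightarrow> finite {j. r j \<noteq> 0}"
  shows "z \<in> set_pmf (offspring_conv p ts) \<Longrightarrow> finite {j. z j \<noteq> 0}"
proof (induction ts arbitrary: z)
  case Nil then show ?case by simp
next
  case (Cons t ts)
  then obtain a b where ab: "a \<in> set_pmf (p t)" "b \<in> set_pmf (offspring_conv p ts)" "z = (\<lambda>j. a j + b j)"
    by auto
  have "{j. z j \<noteq> 0} \<subseteq> {j. a j \<noteq> 0} \<union> {j. b j \<noteq> 0}" using ab by auto
  then show ?case using assms[OF ab(1)] Cons.IH[OF ab(2)] finite_subset by blast
qed

lemma gwdist_fin:
  assumes "\<And>i r. r \<in> set_pmf (p i) \<Longrightarrow> finite {j. r j \<noteq> 0}"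
  shows "z \<in> set_pmf (gwdist p \<mu> n) \<Longrightarrow> finite {j. z j \<noteq> 0}"
proof (induction n arbitrary: z)
  case 0 then show ?case by (auto simp: unitvec_def)
next
  case (Suc n)
  then show ?case using offspring_conv_fin[OF assms] by (auto simp: gw_kernel_def)
qed

lemma nn_offspring_conv:
  "(\<integral>\<^sup>+ y. of_nat (y j) \<partial>offspring_conv p ts) = (\<Sum>t\<leftarrow>ts. mean_matrix p t j)"
proof (induction ts)
  case Nil then show ?case by simp
next
  case (Cons t ts)
  have "(\<integral>\<^sup>+ y. of_nat (y j) \<partial>offspring_conv p (t # ts))
     = (\<integral>\<^sup>+a. \<integral>\<^sup>+b. of_nat (a j) + of_nat (b j) \<partial>offspring_conv p ts \<partial>p t)"
    by (simp add: nn_integral_pair_pmf' case_prod_beta)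
  also have "\<dots> = (\<integral>\<^sup>+a. of_nat (a j) + (\<integral>\<^sup>+b. of_nat (b j) \<partial>offspring_conv p ts) \<partial>p t)"
    by (simp add: nn_integral_add measure_pmf.emeasure_space_1)
  also have "\<dots> = mean_matrix p t j + (\<integral>\<^sup>+b. of_nat (b j) \<partial>offspring_conv p ts)"
    by (simp add: nn_integral_add measure_pmf.emeasure_space_1 mean_matrix_def)
  finally show ?case using Cons by simp
qed

lemma sum_list_map_concat:
  "(\<Sum>t\<leftarrow>concat xss. (f t :: 'a::monoid_add)) = (\<Sum>xs\<leftarrow>xss. \<Sum>t\<leftarrow>xs. f t)"
  by (induction xss) auto

lemma sum_list_individuals:
  assumes "finite {j. z j \<noteq> 0}"
  shows "(\<Sum>t\<leftarrow>individuals z. (f t :: ennreal)) = (\<Sum>k. of_nat (z k) * f k)"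
proof -
  let ?S = "{j. z j \<noteq> 0}"
  have "(\<Sum>t\<leftarrow>individuals z. f t) = (\<Sum>k\<leftarrow>sorted_list_of_set ?S. of_nat (z k) * f k)"
    unfolding individuals_def by (simp add: sum_list_map_concat comp_def map_replicate sum_list_replicate)
  also have "\<dots> = (\<Sum>k\<in>?S. of_nat (z k) * f k)"
    using assms by (simp add: sum_list_distinct_conv_sum_set)
  also have "\<dots> = (\<Sum>k. of_nat (z k) * f k)"
    by (rule suminf_finite[symmetric]) (use assms in auto)
  finally show ?thesis .
qed

lemma popsize_suminf:
  assumes "finite {j. z j \<noteq> 0}"
  shows "(of_nat (popsize z) :: ennreal) = (\<Sum>k. of_nat (z k))"
proof -
  have "(of_nat (popsize z) :: ennreal) = (\<Sum>k\<in>{j. z j \<noteq> 0}. of_nat (z k))"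
    by (simp add: popsize_def)
  also have "\<dots> = (\<Sum>k. of_nat (z k))"
    by (rule suminf_finite[symmetric]) (use assms in auto)
  finally show ?thesis .
qed

definition mv :: "(nat \<Rightarrow> popstate pmf) \<Rightarrow> nat pmf \<Rightarrow> nat \<Rightarrow> nat \<Rightarrow> ennreal" where
  "mv p \<mu> n j = (\<integral>\<^sup>+ z. of_nat (z j) \<partial>gwdist p \<mu> n)"

lemma mv_0: "mv p \<mu> 0 j = ennreal (pmf \<mu> j)"
proof -
  have "mv p \<mu> 0 j = (\<integral>\<^sup>+ i. indicator {j} i \<partial>\<mu>)"
    unfolding mv_def by (auto intro!: nn_integral_cong simp: unitvec_def indicator_def)
  also have "\<dots> = ennreal (pmf \<mu> j)" by (simp add: emeasure_pmf_single)
  finally show ?thesis .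
qed

lemma mv_Suc:
  assumes fo: "\<And>i r. r \<in> set_pmf (p i) \<Longrightarrow> finite {j. r j \<noteq> 0}"
  shows "mv p \<mu> (Suc n) j = (\<Sum>k. mv p \<mu> n k * mean_matrix p k j)"
proof -
  have "mv p \<mu> (Suc n) j = (\<integral>\<^sup>+ z. (\<integral>\<^sup>+ y. of_nat (y j) \<partial>gw_kernel p z) \<partial>gwdist p \<mu> n)"
    by (simp add: mv_def)
  also have "\<dots> = (\<integral>\<^sup>+ z. (\<Sum>k. of_nat (z k) * mean_matrix p k j) \<partial>gwdist p \<mu> n)"
  proof (rule nn_integral_cong_AE)
    show "AE z in measure_pmf (gwdist p \<mu> n). (\<integral>\<^sup>+ y. of_nat (y j) \<partial>gw_kernel p z) = (\<Sum>k. of_nat (z k) * mean_matrix p k j)"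
      using gwdist_fin[OF fo]
      by (auto simp: AE_measure_pmf_iff gw_kernel_def nn_offspring_conv sum_list_individuals)
  qed
  also have "\<dots> = (\<Sum>k. \<integral>\<^sup>+ z. of_nat (z k) * mean_matrix p k j \<partial>gwdist p \<mu> n)"
    by (rule nn_integral_suminf) simp
  also have "\<dots> = (\<Sum>k. mv p \<mu> n k * mean_matrix p k j)"
    by (simp add: mv_def nn_integral_multc)
  finally show ?thesis .
qed

lemma exp_popsize:
  assumes fo: "\<And>i r. r \<in> set_pmf (p i) \<Longrightarrow> finite {j. r j \<noteq> 0}"
  shows "(\<integral>\<^sup>+ z. of_nat (popsize z) \<partial>gwdist p \<mu> n) = (\<Sum>j. mv p \<mu> n j)"
proof -
  have "(\<integral>\<^sup>+ z. of_nat (popsize z) \<partial>gwdist p \<mu> n) = (\<integral>\<^sup>+ z. (\<Sum>j. of_nat (z j)) \<partial>gwdist p \<mu> n)"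
    by (rule nn_integral_cong_AE) (use gwdist_fin[OF fo] in \<open>auto simp: AE_measure_pmf_iff popsize_suminf\<close>)
  also have "\<dots> = (\<Sum>j. mv p \<mu> n j)"
    unfolding mv_def by (rule nn_integral_suminf) simp
  finally show ?thesis .
qed

lemma suminf_pmf_ennreal: "(\<Sum>j. ennreal (pmf (\<alpha>::nat pmf) j)) = 1"
proof -
  have "(\<Sum>j. ennreal (pmf \<alpha> j)) = (\<integral>\<^sup>+ j. ennreal (pmf \<alpha> j) \<partial>count_space UNIV)"
    by (simp add: nn_integral_count_space_nat)
  also have "\<dots> = emeasure (measure_pmf \<alpha>) UNIV" by (rule nn_integral_pmf)
  also have "\<dots> = 1" using measure_pmf.emeasure_space_1[of \<alpha>] by simp
  finally show ?thesis .
qed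

lemma mv_upper:
  assumes fo: "\<And>i r. r \<in> set_pmf (p i) \<Longrightarrow> finite {j. r j \<noteq> 0}"
    and H: "\<And>j. (\<Sum>k. ennreal (pmf \<alpha> k) * mean_matrix p k j) \<le> ennreal (lam * pmf \<alpha> j)"
    and lam: "lam \<ge> 0"
    and init: "\<And>j. mv p \<mu> 0 j \<le> c * ennreal (pmf \<alpha> j)"
  shows "mv p \<mu> n j \<le> c * ennreal (lam ^ n) * ennreal (pmf \<alpha> j)"
proof (induction n arbitrary: j)
  case 0 then show ?case using init by simp
next
  case (Suc n)
  have "mv p \<mu> (Suc n) j = (\<Sum>k. mv p \<mu> n k * mean_matrix p k j)" by (rule mv_Suc[OF fo])
  also have "\<dots> \<le> (\<Sum>k. (c * ennreal (lam ^ n)) * (ennreal (pmf \<alpha> k) * mean_matrix p k j))"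
    by (rule suminf_le) (auto intro!: mult_right_mono Suc simp: mult.assoc[symmetric])
  also have "\<dots> = (c * ennreal (lam ^ n)) * (\<Sum>k. ennreal (pmf \<alpha> k) * mean_matrix p k j)"
    by simp
  also have "\<dots> \<le> (c * ennreal (lam ^ n)) * ennreal (lam * pmf \<alpha> j)"
    by (rule mult_left_mono[OF H]) simp
  also have "\<dots> = c * ennreal (lam ^ Suc n) * ennreal (pmf \<alpha> j)"
    using lam by (simp add: ennreal_mult mult_ac)
  finally show ?case .
qed

lemma mv_lower:
  assumes fo: "\<And>i r. r \<in> set_pmf (p i) \<Longrightarrow> finite {j. r j \<noteq> 0}"
    and H: "\<And>j. (\<Sum>k. ennreal (pmf \<alpha> k) * mean_matrix p k j) \<ge> ennreal (lam * pmf \<alpha> j)"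
    and lam: "lam \<ge> 0"
  shows "mv p \<alpha> n j \<ge> ennreal (lam ^ n) * ennreal (pmf \<alpha> j)"
proof (induction n arbitrary: j)
  case 0 then show ?case by (simp add: mv_0)
next
  case (Suc n)
  have "ennreal (lam ^ Suc n) * ennreal (pmf \<alpha> j) = ennreal (lam ^ n) * ennreal (lam * pmf \<alpha> j)"
    using lam by (simp add: ennreal_mult mult_ac)
  also have "\<dots> \<le> ennreal (lam ^ n) * (\<Sum>k. ennreal (pmf \<alpha> k) * mean_matrix p k j)"
    by (rule mult_left_mono[OF H]) simp
  also have "\<dots> = (\<Sum>k. ennreal (lam ^ n) * (ennreal (pmf \<alpha> k) * mean_matrix p k j))"
    by simp
  also have "\<dots> \<le> (\<Sum>k. mv p \<alpha> n k * mean_matrix p k j)"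
    by (rule suminf_le) (auto intro!: mult_right_mono Suc simp: mult.assoc[symmetric])
  also have "\<dots> = mv p \<alpha> (Suc n) j" by (rule mv_Suc[OF fo, symmetric])
  finally show ?case .
qed

fun gwpath :: "(nat \<Rightarrow> popstate pmf) \<Rightarrow> nat pmf \<Rightarrow> nat \<Rightarrow> popstate list pmf" where
  "gwpath p \<mu> 0 = map_pmf (\<lambda>i. [unitvec i]) \<mu>"
| "gwpath p \<mu> (Suc n) = bind_pmf (gwpath p \<mu> n) (\<lambda>xs. map_pmf (\<lambda>y. xs @ [y]) (gw_kernel p (last xs)))"

lemma gwpath_last: "map_pmf last (gwpath p \<mu> n) = gwdist p \<mu> n"
proof (induction n)
  case 0 then show ?case by (simp add: map_pmf_comp)
next
  case (Suc n)
  have "map_pmf last (gwpath p \<mu> (Suc n)) = bind_pmf (gwpath p \<mu> n) (\<lambda>xs. gw_kernel p (last xs))"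
    by (simp add: map_bind_pmf map_pmf_comp)
  also have "\<dots> = bind_pmf (map_pmf last (gwpath p \<mu> n)) (gw_kernel p)"
    by (simp add: bind_map_pmf)
  finally show ?case using Suc by simp
qed

lemma gwpath_length: "xs \<in> set_pmf (gwpath p \<mu> n) \<Longrightarrow> length xs = Suc n"
  by (induction n arbitrary: xs) auto

lemma pmf_snoc_map:
  "pmf (map_pmf (\<lambda>y. a @ [y]) K) ys = (if ys \<noteq> [] \<and> a = butlast ys then pmf K (last ys) else 0)"
proof (cases "ys \<noteq> [] \<and> a = butlast ys")
  case True
  then have "ys = a @ [last ys]" by simp
  then have "pmf (map_pmf (\<lambda>y. a @ [y]) K) ys = pmf (map_pmf (\<lambda>y. a @ [y]) K) (a @ [last ys])" by simp
  also have "\<dots> = pmf K (last ys)" by (rule pmf_map_inj') (auto simp: inj_def)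
  finally show ?thesis using True by simp
next
  case False
  then have "ys \<notin> (\<lambda>y. a @ [y]) ` set_pmf K" by auto
  then have "pmf (map_pmf (\<lambda>y. a @ [y]) K) ys = 0" by (simp add: pmf_map_outside)
  then show ?thesis using False by (simp only: if_False)
qed

lemma pmf_gwpath_Suc:
  "pmf (gwpath p \<mu> (Suc n)) ys = (if ys \<noteq> [] then pmf (gwpath p \<mu> n) (butlast ys) * pmf (gw_kernel p (last (butlast ys))) (last ys) else 0)"
proof -
  have "ennreal (pmf (gwpath p \<mu> (Suc n)) ys) = (\<integral>\<^sup>+a. (if ys \<noteq> [] \<and> a = butlast ys then ennreal (pmf (gw_kernel p (last a)) (last ys)) else 0) \<partial>gwpath p \<mu> n)"
    by (simp add: ennreal_pmf_bind pmf_snoc_map if_distrib cong: if_cong)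
  also have "\<dots> = (\<integral>\<^sup>+a. indicator {butlast ys} a * (if ys \<noteq> [] then ennreal (pmf (gw_kernel p (last (butlast ys))) (last ys)) else 0) \<partial>gwpath p \<mu> n)"
    by (rule nn_integral_cong) (auto simp: indicator_def)
  also have "\<dots> = ennreal (pmf (gwpath p \<mu> n) (butlast ys)) * (if ys \<noteq> [] then ennreal (pmf (gw_kernel p (last (butlast ys))) (last ys)) else 0)"
    by (simp add: nn_integral_multc emeasure_pmf_single)
  also have "\<dots> = ennreal (if ys \<noteq> [] then pmf (gwpath p \<mu> n) (butlast ys) * pmf (gw_kernel p (last (butlast ys))) (last ys) else 0)"
    by (simp add: ennreal_mult)
  finally show ?thesis by (simp add: ennreal_inj)
qed

definition pathprob :: "(nat \<Rightarrow> popstate pmf) \<Rightarrow> nat pmf \<Rightarrow> popstate list \<Rightarrow> real" where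
  "pathprob p \<mu> xs = pmf (map_pmf unitvec \<mu>) (hd xs) *
          (\<Prod>k < length xs - 1. pmf (gw_kernel p (xs ! k)) (xs ! Suc k))"

lemma pmf_gwpath:
  "pmf (gwpath p \<mu> n) xs = (if length xs = Suc n then pathprob p \<mu> xs else 0)"
proof (induction n arbitrary: xs)
  case 0
  have eq: "gwpath p \<mu> 0 = map_pmf (\<lambda>x. [x]) (map_pmf unitvec \<mu>)" by (simp add: map_pmf_comp)
  show ?case
  proof (cases "length xs = 1")
    case True
    then obtain x where x: "xs = [x]" by (cases xs) auto
    have "pmf (map_pmf (\<lambda>x. [x]) (map_pmf unitvec \<mu>)) [x] = pmf (map_pmf unitvec \<mu>) x"
      by (rule pmf_map_inj') (auto simp: inj_def)
    then show ?thesis using x eq by (simp add: pathprob_def)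
  next
    case False
    then have "xs \<notin> (\<lambda>x. [x]) ` set_pmf (map_pmf unitvec \<mu>)" by auto
    then show ?thesis using False eq by (simp add: pmf_map_outside)
  qed
next
  case (Suc n)
  show ?case
  proof (cases "length xs = Suc (Suc n)")
    case False
    then show ?thesis by (subst pmf_gwpath_Suc) (auto simp: Suc)
  next
    case True
    define ys where "ys = butlast xs"
    have ly: "length ys = Suc n" using True by (simp add: ys_def)
    have "xs \<noteq> []" using True by auto
    then have xs: "xs = ys @ [last xs]" by (simp add: ys_def)
    have nth: "\<And>k. k < Suc n \<Longrightarrow> xs ! k = ys ! k" by (subst xs) (simp add: nth_append ly)
    have hd: "hd xs = hd ys" using ly by (subst xs) (cases ys, auto)
    have "ys \<noteq> []" using ly by auto
    then have lastys: "last ys = xs ! n" using ly nth[of n] by (simp add: last_conv_nth)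
    have lastxs: "last xs = xs ! Suc n" using True \<open>xs \<noteq> []\<close> by (simp add: last_conv_nth)
    have p1: "(\<Prod>k < n. pmf (gw_kernel p (xs ! k)) (xs ! Suc k)) = (\<Prod>k < length ys - 1. pmf (gw_kernel p (ys ! k)) (ys ! Suc k))"
      using ly nth by (auto intro!: prod.cong)
    have prodeq: "(\<Prod>k < length xs - 1. pmf (gw_kernel p (xs ! k)) (xs ! Suc k))
        = (\<Prod>k < length ys - 1. pmf (gw_kernel p (ys ! k)) (ys ! Suc k)) * pmf (gw_kernel p (xs ! n)) (xs ! Suc n)"
      using True p1 by simp
    show ?thesis using True ly hd lastys lastxs prodeq \<open>xs \<noteq> []\<close>
      by (subst pmf_gwpath_Suc) (simp add: Suc pathprob_def ys_def[symmetric] mult_ac p1)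
  qed
qed

lemma gw_lower:
  assumes gw: "gw_process p \<mu> \<Omega> Z"
  shows "emeasure (gwdist p \<mu> n) A \<le> emeasure \<Omega> {\<omega>\<in>space \<Omega>. Z n \<omega> \<in> A}"
proof -
  interpret prob_space \<Omega> using gw by (simp add: gw_process_def)
  have Zm[measurable]: "\<And>k. Z k \<in> measurable \<Omega> (count_space UNIV)" using gw by (simp add: gw_process_def)
  define E where "E xs = {\<omega>\<in>space \<Omega>. \<forall>k<length xs. Z k \<omega> = xs ! k}" for xs
  define I where "I = {xs \<in> set_pmf (gwpath p \<mu> n). last xs \<in> A}"
  have Es: "E xs \<in> sets \<Omega>" for xs unfolding E_def by measurable
  have cI: "countable I" unfolding I_def by (rule countable_subset[OF _ countable_set_pmf]) auto
  have lenI: "xs \<in> I \<Longrightarrow> length xs = Suc n" for xs unfolding I_def using gwpath_length by blast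
  have disj: "disjoint_family_on E I"
    unfolding disjoint_family_on_def
  proof (intro ballI impI)
    fix xs ys assume "xs \<in> I" "ys \<in> I" "xs \<noteq> ys"
    then have "length xs = length ys" "\<exists>k<length xs. xs ! k \<noteq> ys ! k"
      using lenI by (auto simp: list_eq_iff_nth_eq)
    then show "E xs \<inter> E ys = {}" unfolding E_def by auto
  qed
  have EE: "emeasure \<Omega> (E xs) = pmf (gwpath p \<mu> n) xs" if "xs \<in> I" for xs
  proof -
    have "xs \<noteq> []" using lenI[OF that] by auto
    then have "measure \<Omega> (E xs) = pathprob p \<mu> xs"
      using gw unfolding gw_process_def E_def pathprob_def by blast
    then show ?thesis using lenI[OF that] by (simp add: emeasure_eq_measure pmf_gwpath)
  qed
  have sub: "(\<Union>(E ` I)) \<subseteq> {\<omega>\<in>space \<Omega>. Z n \<omega> \<in> A}"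
  proof
    fix \<omega> assume "\<omega> \<in> \<Union>(E ` I)"
    then obtain xs where xs: "xs \<in> I" "\<omega> \<in> E xs" by auto
    have "xs \<noteq> []" using lenI[OF xs(1)] by auto
    then have "last xs = xs ! n" using lenI[OF xs(1)] by (simp add: last_conv_nth)
    then show "\<omega> \<in> {\<omega>\<in>space \<Omega>. Z n \<omega> \<in> A}" using xs lenI[OF xs(1)] by (auto simp: E_def I_def)
  qed
  have "emeasure (gwdist p \<mu> n) A = emeasure (gwpath p \<mu> n) (last -` A)"
    by (simp flip: gwpath_last)
  also have "\<dots> = emeasure (gwpath p \<mu> n) I"
    unfolding I_def by (subst emeasure_Int_set_pmf[symmetric]) (auto intro!: arg_cong[where f="emeasure _"])
  also have "\<dots> = (\<integral>\<^sup>+ xs. pmf (gwpath p \<mu> n) xs \<partial>count_space I)"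
    by (rule nn_integral_pmf[symmetric])
  also have "\<dots> = (\<integral>\<^sup>+ xs. emeasure \<Omega> (E xs) \<partial>count_space I)"
    by (rule nn_integral_cong) (simp add: EE)
  also have "\<dots> = emeasure \<Omega> (\<Union>(E ` I))"
    by (rule emeasure_UN_countable[symmetric]) (use Es cI disj in auto)
  also have "\<dots> \<le> emeasure \<Omega> {\<omega>\<in>space \<Omega>. Z n \<omega> \<in> A}"
  proof (rule emeasure_mono[OF sub])
    have "Z n -` A \<inter> space \<Omega> \<in> sets \<Omega>" by (rule measurable_sets[OF Zm]) simp
    moreover have "Z n -` A \<inter> space \<Omega> = {\<omega>\<in>space \<Omega>. Z n \<omega> \<in> A}" by auto
    ultimately show "{\<omega>\<in>space \<Omega>. Z n \<omega> \<in> A} \<in> sets \<Omega>" by simp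
  qed
  finally show ?thesis .
qed

lemma gw_distr:
  assumes gw: "gw_process p \<mu> \<Omega> Z"
  shows "distr \<Omega> (count_space UNIV) (Z n) = measure_pmf (gwdist p \<mu> n)"
proof -
  interpret prob_space \<Omega> using gw by (simp add: gw_process_def)
  have Zm[measurable]: "\<And>k. Z k \<in> measurable \<Omega> (count_space UNIV)" using gw by (simp add: gw_process_def)
  have setsZ: "{\<omega>\<in>space \<Omega>. Z n \<omega> \<in> B} \<in> sets \<Omega>" for B
  proof -
    have "Z n -` B \<inter> space \<Omega> \<in> sets \<Omega>" by (rule measurable_sets[OF Zm]) simp
    moreover have "Z n -` B \<inter> space \<Omega> = {\<omega>\<in>space \<Omega>. Z n \<omega> \<in> B}" by auto
    ultimately show ?thesis by simp
  qed
  have lo: "measure_pmf.prob (gwdist p \<mu> n) B \<le> measure \<Omega> {\<omega>\<in>space \<Omega>. Z n \<omega> \<in> B}" for B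
    using gw_lower[OF gw, of n B]
    by (simp add: emeasure_eq_measure measure_pmf.emeasure_eq_measure)
  have eqm: "measure \<Omega> {\<omega>\<in>space \<Omega>. Z n \<omega> \<in> B} = measure_pmf.prob (gwdist p \<mu> n) B" for B
  proof -
    have "measure \<Omega> {\<omega>\<in>space \<Omega>. Z n \<omega> \<in> B} + measure \<Omega> {\<omega>\<in>space \<Omega>. Z n \<omega> \<in> -B} 
          = measure \<Omega> ({\<omega>\<in>space \<Omega>. Z n \<omega> \<in> B} \<union> {\<omega>\<in>space \<Omega>. Z n \<omega> \<in> -B})"
      by (rule finite_measure_Union[symmetric]) (use setsZ in auto)
    also have "({\<omega>\<in>space \<Omega>. Z n \<omega> \<in> B} \<union> {\<omega>\<in>space \<Omega>. Z n \<omega> \<in> -B}) = space \<Omega>" by auto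
    finally have s1: "measure \<Omega> {\<omega>\<in>space \<Omega>. Z n \<omega> \<in> B} + measure \<Omega> {\<omega>\<in>space \<Omega>. Z n \<omega> \<in> -B} = 1"
      by (simp add: prob_space)
    have s2: "measure_pmf.prob (gwdist p \<mu> n) B + measure_pmf.prob (gwdist p \<mu> n) (-B) = 1"
      using measure_pmf.prob_compl[of B "gwdist p \<mu> n"] by (simp add: Compl_eq_Diff_UNIV)
    show ?thesis using lo[of B] lo[of "-B"] s1 s2 by linarith
  qed
  show ?thesis
  proof (rule measure_eqI)
    fix B assume "B \<in> sets (distr \<Omega> (count_space UNIV) (Z n))"
    then have "emeasure (distr \<Omega> (count_space UNIV) (Z n)) B = emeasure \<Omega> (Z n -` B \<inter> space \<Omega>)"
      by (simp add: emeasure_distr)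
    also have "Z n -` B \<inter> space \<Omega> = {\<omega>\<in>space \<Omega>. Z n \<omega> \<in> B}" by auto
    finally show "emeasure (distr \<Omega> (count_space UNIV) (Z n)) B = emeasure (measure_pmf (gwdist p \<mu> n)) B"
      by (simp add: emeasure_eq_measure measure_pmf.emeasure_eq_measure eqm)
  qed simp
qed

lemma gw_nn_integral:
  assumes gw: "gw_process p \<mu> \<Omega> Z"
  shows "(\<integral>\<^sup>+ \<omega>. f (Z n \<omega>) \<partial>\<Omega>) = (\<integral>\<^sup>+ z. f z \<partial>gwdist p \<mu> n)"
proof -
  have Zm: "Z n \<in> measurable \<Omega> (count_space UNIV)" using gw by (simp add: gw_process_def)
  have "(\<integral>\<^sup>+ z. f z \<partial>gwdist p \<mu> n) = (\<integral>\<^sup>+ z. f z \<partial>distr \<Omega> (count_space UNIV) (Z n))"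
    by (simp add: gw_distr[OF gw])
  also have "\<dots> = (\<integral>\<^sup>+ \<omega>. f (Z n \<omega>) \<partial>\<Omega>)"
    by (rule nn_integral_distr[OF Zm]) simp
  finally show ?thesis ..
qed

lemma gw_measure:
  assumes gw: "gw_process p \<mu> \<Omega> Z"
  shows "measure \<Omega> {\<omega>\<in>space \<Omega>. Z n \<omega> \<in> B} = measure_pmf.prob (gwdist p \<mu> n) B"
proof -
  have Zm: "Z n \<in> measurable \<Omega> (count_space UNIV)" using gw by (simp add: gw_process_def)
  have "measure_pmf.prob (gwdist p \<mu> n) B = measure (distr \<Omega> (count_space UNIV) (Z n)) B"
    by (simp add: gw_distr[OF gw])
  also have "\<dots> = measure \<Omega> (Z n -` B \<inter> space \<Omega>)"
    by (rule measure_distr[OF Zm]) simp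
  also have "Z n -` B \<inter> space \<Omega> = {\<omega>\<in>space \<Omega>. Z n \<omega> \<in> B}" by auto
  finally show ?thesis ..
qed

lemma gwdist_bind: "gwdist p \<mu> n = bind_pmf \<mu> (\<lambda>i. gwdist p (return_pmf i) n)"
proof (induction n)
  case 0 then show ?case by (simp add: map_pmf_def bind_return_pmf)
next
  case (Suc n) then show ?case by (simp add: bind_assoc_pmf)
qed

lemma ext_from_limit:
  assumes gw: "gw_process p \<mu> \<Omega> Z"
    and lim: "(\<lambda>n. measure_pmf.prob (gwdist p \<mu> n) {z. popsize z \<noteq> 0}) \<longlonglongrightarrow> 0"
  shows "measure \<Omega> (extinction_event \<Omega> Z) = 1"
proof -
  interpret prob_space \<Omega> using gw by (simp add: gw_process_def)
  have Zm: "\<And>k. Z k \<in> measurable \<Omega> (count_space UNIV)" using gw by (simp add: gw_process_def)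
  have setsZ: "{\<omega>\<in>space \<Omega>. Z n \<omega> \<in> B} \<in> sets \<Omega>" for B n
  proof -
    have "Z n -` B \<inter> space \<Omega> \<in> sets \<Omega>" by (rule measurable_sets[OF Zm]) simp
    moreover have "Z n -` B \<inter> space \<Omega> = {\<omega>\<in>space \<Omega>. Z n \<omega> \<in> B}" by auto
    ultimately show ?thesis by simp
  qed
  let ?S = "{z. popsize z \<noteq> 0}"
  have eE: "extinction_event \<Omega> Z = (\<Union>n. {\<omega>\<in>space \<Omega>. Z n \<omega> \<in> - ?S})"
    by (auto simp: extinction_event_def)
  have Es: "extinction_event \<Omega> Z \<in> sets \<Omega>" unfolding eE
    by (rule sets.countable_UN) (use setsZ in blast)
  have ge: "1 - measure_pmf.prob (gwdist p \<mu> n) ?S \<le> measure \<Omega> (extinction_event \<Omega> Z)" for n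
  proof -
    have "1 - measure_pmf.prob (gwdist p \<mu> n) ?S = measure_pmf.prob (gwdist p \<mu> n) (- ?S)"
      using measure_pmf.prob_compl[of ?S "gwdist p \<mu> n"] by (simp add: Compl_eq_Diff_UNIV)
    also have "\<dots> = measure \<Omega> {\<omega>\<in>space \<Omega>. Z n \<omega> \<in> - ?S}" by (rule gw_measure[OF gw, symmetric])
    also have "\<dots> \<le> measure \<Omega> (extinction_event \<Omega> Z)"
      by (rule finite_measure_mono[OF _ Es]) (auto simp: eE)
    finally show ?thesis .
  qed
  have "(\<lambda>n. 1 - measure_pmf.prob (gwdist p \<mu> n) ?S) \<longlonglongrightarrow> 1 - 0"
    by (intro tendsto_intros lim)
  then have "1 \<le> measure \<Omega> (extinction_event \<Omega> Z)"
    using ge by (intro LIMSEQ_le_const2) auto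
  then show ?thesis using prob_le_1 by (intro antisym) auto
qed

lemma markov_surv: "emeasure (measure_pmf M) {z. popsize z \<noteq> 0} \<le> (\<integral>\<^sup>+ z. of_nat (popsize z) \<partial>M)"
proof -
  have "emeasure (measure_pmf M) {z. popsize z \<noteq> 0} = (\<integral>\<^sup>+ z. indicator {z. popsize z \<noteq> 0} z \<partial>M)"
    by simp
  also have "\<dots> \<le> (\<integral>\<^sup>+ z. of_nat (popsize z) \<partial>M)"
    by (rule nn_integral_mono) (auto simp: indicator_def)
  finally show ?thesis .
qed

theorem mainTheorem9:
  fixes p :: "nat \<Rightarrow> popstate pmf" and \<alpha>1 \<alpha>2 :: "nat pmf" and lam1 lam2 :: real
  assumes fin_offspring: "\<And>i r. r \<in> set_pmf (p i) \<Longrightarrow> finite {j. r j \<noteq> 0}"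
    and fin_mean: "\<And>i j. mean_matrix p i j < \<infinity>"
    and irred: "irreducible_mean p"
    and dich: "dichotomy p TYPE('w)"
    and \<alpha>1_pos: "\<And>i. pmf \<alpha>1 i > 0"
    and lam1: "lam1 < 1"
    and \<alpha>1M: "\<And>j. summable (\<lambda>i. pmf \<alpha>1 i * enn2real (mean_matrix p i j)) \<and>
                  (\<Sum>i. pmf \<alpha>1 i * enn2real (mean_matrix p i j)) \<le> lam1 * pmf \<alpha>1 j"
    and lam2: "lam2 > 1"
    and \<alpha>2M: "\<And>j. (\<Sum>i. ennreal (pmf \<alpha>2 i) * mean_matrix p i j) \<ge> ennreal (lam2 * pmf \<alpha>2 j)"
  shows "(\<forall>i (\<Omega> :: 'w measure) Z. gw_process p (return_pmf i) \<Omega> Z \<longrightarrow>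
            measure \<Omega> (extinction_event \<Omega> Z) = 1)
       \<and> (\<forall>(\<Omega> :: 'w measure) Z. gw_process p \<alpha>1 \<Omega> Z \<longrightarrow>
            (\<forall>n. expected_size \<Omega> Z n \<le> ennreal (lam1 ^ n)) \<and>
            (expected_size \<Omega> Z \<longlonglongrightarrow> 0))
       \<and> (\<forall>(\<Omega> :: 'w measure) Z. gw_process p \<alpha>2 \<Omega> Z \<longrightarrow>
            (expected_size \<Omega> Z \<longlonglongrightarrow> \<infinity>) \<and>
            measure \<Omega> (extinction_event \<Omega> Z) = 1)"
proof -
  let ?S = "{z. popsize z \<noteq> 0}"
  have H1: "(\<Sum>k. ennreal (pmf \<alpha>1 k) * mean_matrix p k j) \<le> ennreal (lam1 * pmf \<alpha>1 j)" for j
  proof -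
    have "(\<Sum>k. ennreal (pmf \<alpha>1 k) * mean_matrix p k j) = (\<Sum>k. ennreal (pmf \<alpha>1 k * enn2real (mean_matrix p k j)))"
    proof (rule suminf_cong)
      fix k
      have "mean_matrix p k j = ennreal (enn2real (mean_matrix p k j))"
        using fin_mean[of k j] by (simp add: ennreal_enn2real less_top)
      then show "ennreal (pmf \<alpha>1 k) * mean_matrix p k j = ennreal (pmf \<alpha>1 k * enn2real (mean_matrix p k j))"
        by (simp add: ennreal_mult)
    qed
    also have "\<dots> = ennreal (\<Sum>k. pmf \<alpha>1 k * enn2real (mean_matrix p k j))"
      by (rule suminf_ennreal2) (use \<alpha>1M in auto)
    also have "\<dots> \<le> ennreal (lam1 * pmf \<alpha>1 j)"
      using \<alpha>1M[of j] by (intro ennreal_leI) auto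
    finally show ?thesis .
  qed
  have lam1_nn: "0 \<le> lam1"
  proof -
    have "0 \<le> (\<Sum>i. pmf \<alpha>1 i * enn2real (mean_matrix p i 0))"
      using \<alpha>1M[of 0] by (intro suminf_nonneg) auto
    then have "0 \<le> lam1 * pmf \<alpha>1 0" using \<alpha>1M[of 0] by linarith
    then show ?thesis using \<alpha>1_pos[of 0] by (simp add: zero_le_mult_iff)
  qed
  have PB: "(\<integral>\<^sup>+ z. of_nat (popsize z) \<partial>gwdist p \<mu> n) \<le> c * ennreal (lam1 ^ n)"
    if init: "\<And>j. mv p \<mu> 0 j \<le> c * ennreal (pmf \<alpha>1 j)" for \<mu> c n
  proof -
    have "(\<integral>\<^sup>+ z. of_nat (popsize z) \<partial>gwdist p \<mu> n) = (\<Sum>j. mv p \<mu> n j)"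
      by (rule exp_popsize[OF fin_offspring])
    also have "\<dots> \<le> (\<Sum>j. (c * ennreal (lam1 ^ n)) * ennreal (pmf \<alpha>1 j))"
      by (rule suminf_le) (auto intro: mv_upper[OF fin_offspring H1 lam1_nn init])
    also have "\<dots> = c * ennreal (lam1 ^ n)" by (simp add: suminf_pmf_ennreal)
    finally show ?thesis .
  qed
  have surv_i: "measure_pmf.prob (gwdist p (return_pmf i) n) ?S \<le> lam1 ^ n / pmf \<alpha>1 i" for i n
  proof -
    have a: "pmf \<alpha>1 i > 0" by (rule \<alpha>1_pos)
    have init: "mv p (return_pmf i) 0 j \<le> ennreal (1 / pmf \<alpha>1 i) * ennreal (pmf \<alpha>1 j)" for j
    proof (cases "j = i")
      case True
      then show ?thesis using a by (simp add: mv_0 ennreal_mult[symmetric])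
    next
      case False
      then show ?thesis by (simp add: mv_0)
    qed
    have "ennreal (measure_pmf.prob (gwdist p (return_pmf i) n) ?S) = emeasure (gwdist p (return_pmf i) n) ?S"
      by (simp add: measure_pmf.emeasure_eq_measure)
    also have "\<dots> \<le> (\<integral>\<^sup>+ z. of_nat (popsize z) \<partial>gwdist p (return_pmf i) n)" by (rule markov_surv)
    also have "\<dots> \<le> ennreal (1 / pmf \<alpha>1 i) * ennreal (lam1 ^ n)" by (rule PB[OF init])
    also have "\<dots> = ennreal (lam1 ^ n / pmf \<alpha>1 i)"
      using a lam1_nn by (simp add: ennreal_mult[symmetric])
    finally show ?thesis using a lam1_nn by (simp add: ennreal_le_iff)
  qed
  have lim_i: "(\<lambda>n. measure_pmf.prob (gwdist p (return_pmf i) n) ?S) \<longlonglongrightarrow> 0" for i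
  proof (rule tendsto_sandwich[of "\<lambda>_. 0" _ _ "\<lambda>n. lam1 ^ n / pmf \<alpha>1 i"])
    show "(\<lambda>n. lam1 ^ n / pmf \<alpha>1 i) \<longlonglongrightarrow> 0"
      by (rule tendsto_divide_zero[OF LIMSEQ_power_zero]) (use lam1 lam1_nn in auto)
  qed (use surv_i in auto)
  have part1: "\<forall>i (\<Omega> :: 'w measure) Z. gw_process p (return_pmf i) \<Omega> Z \<longrightarrow>
            measure \<Omega> (extinction_event \<Omega> Z) = 1"
    using ext_from_limit lim_i by blast
  have part2: "\<forall>(\<Omega> :: 'w measure) Z. gw_process p \<alpha>1 \<Omega> Z \<longrightarrow>
            (\<forall>n. expected_size \<Omega> Z n \<le> ennreal (lam1 ^ n)) \<and>
            (expected_size \<Omega> Z \<longlonglongrightarrow> 0)"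
  proof (intro allI impI)
    fix \<Omega> :: "'w measure" and Z assume gw: "gw_process p \<alpha>1 \<Omega> Z"
    have b: "expected_size \<Omega> Z n \<le> ennreal (lam1 ^ n)" for n
    proof -
      have "expected_size \<Omega> Z n = (\<integral>\<^sup>+ z. of_nat (popsize z) \<partial>gwdist p \<alpha>1 n)"
        unfolding expected_size_def by (rule gw_nn_integral[OF gw])
      also have "\<dots> \<le> 1 * ennreal (lam1 ^ n)" by (rule PB) (simp add: mv_0)
      finally show ?thesis by simp
    qed
    have L0: "(\<lambda>n. ennreal (lam1 ^ n)) \<longlonglongrightarrow> ennreal 0"
      by (rule tendsto_ennrealI[OF LIMSEQ_power_zero]) (use lam1 lam1_nn in auto)
    have "expected_size \<Omega> Z \<longlonglongrightarrow> 0"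
    proof (rule tendsto_sandwich[of "\<lambda>_. 0" "expected_size \<Omega> Z" sequentially "\<lambda>n. ennreal (lam1 ^ n)"])
      show "\<forall>\<^sub>F n in sequentially. 0 \<le> expected_size \<Omega> Z n" by simp
      show "\<forall>\<^sub>F n in sequentially. expected_size \<Omega> Z n \<le> ennreal (lam1 ^ n)" using b by simp
      show "(\<lambda>n. 0) \<longlonglongrightarrow> 0" by simp
      show "(\<lambda>n. ennreal (lam1 ^ n)) \<longlonglongrightarrow> 0" using L0 by simp
    qed
    then show "(\<forall>n. expected_size \<Omega> Z n \<le> ennreal (lam1 ^ n)) \<and> (expected_size \<Omega> Z \<longlonglongrightarrow> 0)"
      using b by blast
  qed
  have lim2: "(\<lambda>n. measure_pmf.prob (gwdist p \<alpha>2 n) ?S) \<longlonglongrightarrow> 0"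
  proof -
    define u where "u n i = measure_pmf.prob (gwdist p (return_pmf i) n) ?S" for n i
    have "(\<lambda>n. (\<integral>\<^sup>+i. norm ((\<lambda>_. 0::real) i - u n i) \<partial>\<alpha>2)) \<longlonglongrightarrow> 0"
    proof (rule nn_integral_dominated_convergence_norm[where w="\<lambda>_. 1"])
      show "AE x in measure_pmf \<alpha>2. norm (u j x) \<le> 1" for j by (simp add: u_def)
      show "(\<integral>\<^sup>+ x. ennreal 1 \<partial>measure_pmf \<alpha>2) < \<infinity>" by simp
      show "AE x in measure_pmf \<alpha>2. (\<lambda>i. u i x) \<longlonglongrightarrow> 0" using lim_i by (simp add: u_def)
    qed (simp_all add: u_def)
    moreover have "(\<integral>\<^sup>+i. norm ((\<lambda>_. 0::real) i - u n i) \<partial>\<alpha>2) = ennreal (measure_pmf.prob (gwdist p \<alpha>2 n) ?S)" for n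
    proof -
      have "ennreal (measure_pmf.prob (gwdist p \<alpha>2 n) ?S) = emeasure (gwdist p \<alpha>2 n) ?S"
        by (simp add: measure_pmf.emeasure_eq_measure)
      also have "\<dots> = (\<integral>\<^sup>+ z. indicator ?S z \<partial>gwdist p \<alpha>2 n)" by simp
      also have "\<dots> = (\<integral>\<^sup>+ i. (\<integral>\<^sup>+ z. indicator ?S z \<partial>gwdist p (return_pmf i) n) \<partial>\<alpha>2)"
        by (subst gwdist_bind) simp
      also have "\<dots> = (\<integral>\<^sup>+i. norm ((\<lambda>_. 0::real) i - u n i) \<partial>\<alpha>2)"
        by (rule nn_integral_cong) (simp add: u_def measure_pmf.emeasure_eq_measure)
      finally show ?thesis ..
    qed
    ultimately have "(\<lambda>n. ennreal (measure_pmf.prob (gwdist p \<alpha>2 n) ?S)) \<longlonglongrightarrow> ennreal 0" by simp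
    then show ?thesis by (subst (asm) tendsto_ennreal_iff) auto
  qed
  have part3: "\<forall>(\<Omega> :: 'w measure) Z. gw_process p \<alpha>2 \<Omega> Z \<longrightarrow>
            (expected_size \<Omega> Z \<longlonglongrightarrow> \<infinity>) \<and>
            measure \<Omega> (extinction_event \<Omega> Z) = 1"
  proof (intro allI impI conjI)
    fix \<Omega> :: "'w measure" and Z assume gw: "gw_process p \<alpha>2 \<Omega> Z"
    show "measure \<Omega> (extinction_event \<Omega> Z) = 1" by (rule ext_from_limit[OF gw lim2])
    have b: "ennreal (lam2 ^ n) \<le> expected_size \<Omega> Z n" for n
    proof -
      have "ennreal (lam2 ^ n) = (\<Sum>j. ennreal (lam2 ^ n) * ennreal (pmf \<alpha>2 j))"
        by (simp add: suminf_pmf_ennreal)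
      also have "\<dots> \<le> (\<Sum>j. mv p \<alpha>2 n j)"
        by (rule suminf_le) (use lam2 in \<open>auto intro: mv_lower[OF fin_offspring \<alpha>2M]\<close>)
      also have "\<dots> = (\<integral>\<^sup>+ z. of_nat (popsize z) \<partial>gwdist p \<alpha>2 n)"
        by (rule exp_popsize[OF fin_offspring, symmetric])
      also have "\<dots> = expected_size \<Omega> Z n"
        unfolding expected_size_def by (rule gw_nn_integral[OF gw, symmetric])
      finally show ?thesis .
    qed
    have "expected_size \<Omega> Z \<longlonglongrightarrow> top"
      unfolding tendsto_top_iff_ennreal
    proof (intro allI impI)
      fix l :: real assume "0 \<le> l"
      obtain N where N: "l < lam2 ^ N" using real_arch_pow[OF lam2] by blast
      have lN: "l < lam2 ^ n" if "n \<ge> N" for n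
      proof -
        have "lam2 ^ N \<le> lam2 ^ n" using that lam2 by (intro power_increasing) auto
        then show ?thesis using N by linarith
      qed
      have "ennreal l < expected_size \<Omega> Z n" if "n \<ge> N" for n
      proof -
        have "ennreal l < ennreal (lam2 ^ n)"
          using lN[OF that] \<open>0 \<le> l\<close> by (simp add: ennreal_less_iff)
        also have "\<dots> \<le> expected_size \<Omega> Z n" by (rule b)
        finally show ?thesis .
      qed
      then show "\<forall>\<^sub>F n in sequentially. ennreal l < expected_size \<Omega> Z n"
        by (auto simp: eventually_sequentially)
    qed
    then show "expected_size \<Omega> Z \<longlonglongrightarrow> \<infinity>" by simp
  qed
  show ?thesis using part1 part2 part3 by blast
qed

end
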